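(* Let $f:2^{\mathcal N}\to\mathbb R_{\ge0}$ be non-negative submodular and $\mathcal M=(\mathcal N,\mathcal I)$ a matroid of rank $k$, padded with dummy elements as described in the context. Consider the Smooth Residual Random Greedy algorithm (general matroid) with parameter $T$: $S_0=\emptyset$; for $i=1,\dots,T$, let $M_i$ be a base of $\mathcal M/S_{i-1}$ maximizing $\sum_{u\in M_i}[f(S_{i-1}\cup\{u\})-f(S_{i-1})]$; with probability $1-|S_{i-1}|/k$ let $u_i$ be a uniformly random element of $M_i$ and set $S_i=S_{i-1}\cup\{u_i\}$; otherwise set $S_i=S_{i-1}$. Then for every $i=1,\dots,T$, $$\mathbb E[f(S_i)]-\mathbb E[f(S_{i-1})]\ge\frac1k\,\mathbb E\big[f(O_{S_{i-1}}\cup S_{i-1})-f(S_{i-1})\big].$$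
   Context: A set function $f$ is submodular if $f(A\cup B)+f(A\cap B)\le f(A)+f(B)$ for all $A,B\subseteq\mathcal N$. For $S\in\mathcal I$, the contracted matroid $\mathcal M/S$ has ground set $\mathcal N\setminus S$, with $S'\subseteq\mathcal N\setminus S$ independent iff $S'\cup S\in\mathcal I$. Padding assumption: the ground set contains zero-contribution dummy elements (e.g., a parallel copy $u'$ of every original element $u$, a set being independent iff it contains at most one of $u,u'$ for each $u$ and its projection onto the original elements is independent, and $f$ depending only on the original elements of a set), so that for every $S\in\mathcal I$ one may fix $O_S$ to be a set $A$ maximizing $f(S\cup A)$ over independent sets $A$ of $\mathcal M/S$ which is moreover a base of $\mathcal M/S$ (so $S\cup O_S$ is a base of $\mathcal M$ and $|O_S|=k-|S|$). *)

theory Defs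
  imports "HOL-Probability.Probability_Mass_Function"
begin

definition matroid :: "'a set \<Rightarrow> 'a set set \<Rightarrow> bool" where
  "matroid N Ind \<longleftrightarrow> finite N \<and> (\<forall>A\<in>Ind. A \<subseteq> N) \<and> {} \<in> Ind \<and>
     (\<forall>A B. A \<in> Ind \<and> B \<subseteq> A \<longrightarrow> B \<in> Ind) \<and>
     (\<forall>A B. A \<in> Ind \<and> B \<in> Ind \<and> card A < card B \<longrightarrow> (\<exists>x\<in>B - A. insert x A \<in> Ind))"

definition matroid_rank :: "'a set set \<Rightarrow> nat" where
  "matroid_rank Ind = Max (card ` Ind)"

definition is_base :: "'a set \<Rightarrow> 'a set set \<Rightarrow> 'a set \<Rightarrow> bool" where
  "is_base N Ind B \<longleftrightarrow> B \<in> Ind \<and> (\<forall>x\<in>N - B. insert x B \<notin> Ind)"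

definition contract_ground :: "'a set \<Rightarrow> 'a set \<Rightarrow> 'a set" where
  "contract_ground N S = N - S"

definition contract_indep :: "'a set \<Rightarrow> 'a set set \<Rightarrow> 'a set \<Rightarrow> 'a set set" where
  "contract_indep N Ind S = {A. A \<subseteq> N - S \<and> A \<union> S \<in> Ind}"

definition submodular_on :: "'a set \<Rightarrow> ('a set \<Rightarrow> real) \<Rightarrow> bool" where
  "submodular_on N f \<longleftrightarrow>
     (\<forall>A B. A \<subseteq> N \<and> B \<subseteq> N \<longrightarrow> f (A \<union> B) + f (A \<inter> B) \<le> f A + f B)"

definition srrg_step :: "nat \<Rightarrow> ('a set \<Rightarrow> 'a set) \<Rightarrow> 'a set \<Rightarrow> 'a set pmf" where
  "srrg_step k Mc S =
     bind_pmf (bernoulli_pmf (1 - real (card S) / real k))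
       (\<lambda>b. if b then map_pmf (\<lambda>u. insert u S) (pmf_of_set (Mc S)) else return_pmf S)"

fun srrg_dist :: "nat \<Rightarrow> ('a set \<Rightarrow> 'a set) \<Rightarrow> nat \<Rightarrow> 'a set pmf" where
  "srrg_dist k Mc 0 = return_pmf {}"
| "srrg_dist k Mc (Suc i) = bind_pmf (srrg_dist k Mc i) (srrg_step k Mc)"

end

theory Submission
  imports Defs
begin

lemma submod_sum:
  assumes submod: "submodular_on N f" and S: "S \<subseteq> N"
  shows "finite B \<Longrightarrow> B \<subseteq> N \<Longrightarrow> B \<inter> S = {} \<Longrightarrow>
     f (S \<union> B) - f S \<le> (\<Sum>u\<in>B. f (insert u S) - f S)"
proof (induction B rule: finite_induct)
  case empty then show ?case by simp
next
  case (insert x B)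
  have sub: "\<And>A B. A \<subseteq> N \<Longrightarrow> B \<subseteq> N \<Longrightarrow> f (A \<union> B) + f (A \<inter> B) \<le> f A + f B"
    using submod unfolding submodular_on_def by blast
  have i1: "insert x S \<subseteq> N" using insert.prems S by auto
  have i2: "S \<union> B \<subseteq> N" using insert.prems S by auto
  have "f (insert x S \<union> (S \<union> B)) + f (insert x S \<inter> (S \<union> B)) \<le> f (insert x S) + f (S \<union> B)"
    using sub[OF i1 i2] .
  moreover have "insert x S \<union> (S \<union> B) = S \<union> insert x B" by auto
  moreover have "insert x S \<inter> (S \<union> B) = S" using insert.hyps insert.prems by auto
  ultimately have "f (S \<union> insert x B) - f (S \<union> B) \<le> f (insert x S) - f S" by simp
  moreover have "f (S \<union> B) - f S \<le> (\<Sum>u\<in>B. f (insert u S) - f S)"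
    using insert by auto
  ultimately show ?case using insert.hyps by simp
qed

lemma base_card:
  assumes matroid: "matroid N Ind" and S: "S \<in> Ind"
    and B: "is_base (contract_ground N S) (contract_indep N Ind S) B"
  shows "finite B \<and> B \<subseteq> N - S \<and> card B + card S = matroid_rank Ind"
proof -
  have fin: "finite N" and sub: "\<forall>A\<in>Ind. A \<subseteq> N" and emp: "{} \<in> Ind"
    and aug: "\<forall>A B. A \<in> Ind \<and> B \<in> Ind \<and> card A < card B \<longrightarrow> (\<exists>x\<in>B - A. insert x A \<in> Ind)"
    using matroid unfolding matroid_def by auto
  have finI: "finite Ind" using sub fin by (meson Pow_iff finite_Pow_iff finite_subset subsetI)
  have le: "card Y \<le> matroid_rank Ind" if "Y \<in> Ind" for Y
    unfolding matroid_rank_def using finI that by auto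
  obtain X where X: "X \<in> Ind" "card X = matroid_rank Ind"
    unfolding matroid_rank_def using finI emp
    by (metis (mono_tags, lifting) Max_in empty_iff finite_imageI image_iff image_is_empty)
  have BS: "B \<subseteq> N - S" "B \<union> S \<in> Ind"
    using B unfolding is_base_def contract_indep_def by auto
  have maxl: "\<forall>x\<in>N - S - B. insert x B \<notin> contract_indep N Ind S"
    using B unfolding is_base_def contract_ground_def by auto
  have finB: "finite B" using BS fin finite_subset by blast
  have finS: "finite S" using S sub fin finite_subset by blast
  have c: "card (B \<union> S) = card B + card S"
    using BS finB finS by (subst card_Un_disjoint) auto
  have "\<not> card (B \<union> S) < matroid_rank Ind"
  proof
    assume "card (B \<union> S) < matroid_rank Ind"
    then obtain x where x: "x \<in> X - (B \<union> S)" "insert x (B \<union> S) \<in> Ind"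
      using aug X BS by metis
    have "x \<in> N" using x X sub by auto
    moreover have "insert x B \<in> contract_indep N Ind S"
      unfolding contract_indep_def using x BS \<open>x \<in> N\<close> by auto
    ultimately show False using maxl x by auto
  qed
  then have "card (B \<union> S) = matroid_rank Ind" using le BS by force
  then show ?thesis using c finB BS by auto
qed

lemma bern0: "set_pmf (bernoulli_pmf 0) = {False}"
  by (auto simp: set_pmf_iff)

lemma bern0r: "bernoulli_pmf 0 = return_pmf False"
  using bern0 set_pmf_subset_singleton by (metis order_refl)

lemma supp_step:
  assumes matroid: "matroid N Ind" and S: "S \<in> Ind"
    and Mc: "is_base (contract_ground N S) (contract_indep N Ind S) (Mc S)"
    and rank: "k = matroid_rank Ind" and kpos: "k > 0"
  shows "set_pmf (srrg_step k Mc S) \<subseteq> Ind"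
proof -
  have bc: "finite (Mc S) \<and> Mc S \<subseteq> N - S \<and> card (Mc S) + card S = k"
    using base_card[OF matroid S Mc] rank by simp
  have ins: "insert u S \<in> Ind" if "u \<in> Mc S" for u
  proof -
    have "Mc S \<union> S \<in> Ind" using Mc unfolding is_base_def contract_indep_def by auto
    moreover have "insert u S \<subseteq> Mc S \<union> S" using that by auto
    ultimately show ?thesis using matroid unfolding matroid_def by blast
  qed
  show ?thesis
  proof (cases "Mc S = {}")
    case True
    then have "card S = k" using bc by simp
    then have "1 - real (card S) / real k = 0" using kpos by auto
    then show ?thesis unfolding srrg_step_def using S
      by (simp add: bern0)
  next
    case False
    then show ?thesis unfolding srrg_step_def using S bc ins
      by (auto simp: set_pmf_of_set[OF False] split: if_splits)
  qed
qed


lemma exp_bern: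
  assumes "0 \<le> p" "p \<le> 1" "\<And>b. finite (set_pmf (h b))"
  shows "measure_pmf.expectation (bind_pmf (bernoulli_pmf p) h) (f::_\<Rightarrow>real)
     = p * measure_pmf.expectation (h True) f + (1 - p) * measure_pmf.expectation (h False) f"
  using assms by (subst pmf_expectation_bind[where A=UNIV]) (auto simp: UNIV_bool)

lemma alg:
  fixes b m E Sm x :: real
  assumes "b > 0" "m \<ge> 0" "E = (1 - m/(b+m)) * (Sm/b) + (1 - (1 - m/(b+m))) * x"
  shows "E - x = 1/(b+m) * (Sm - b*x)"
proof -
  have bm: "b + m > 0" using assms by simp
  have h0: "1 - m/(b+m) = b/(b+m)" using bm by (simp add: field_simps)
  have h1: "1 - (1 - m/(b+m)) = m/(b+m)" by simp
  have h2: "b/(b+m) * (Sm/b) = Sm/(b+m)" using assms(1) by simp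
  have "E = b/(b+m) * (Sm/b) + m/(b+m) * x" using assms(3) unfolding h1 unfolding h0 .
  then have e: "E = Sm/(b+m) + m/(b+m) * x" unfolding h2 .
  define c where "c = 1/(b+m)"
  have c0: "c*(b+m) = 1" using bm unfolding c_def by simp
  then have c1: "c*b + c*m = 1" by (simp add: distrib_left)
  have x1: "x = c*b*x + c*m*x" using c1 by (metis distrib_right mult_1)
  have e2: "E = Sm*c + m*c*x" using e unfolding c_def by simp
  show ?thesis unfolding c_def[symmetric] using e2 x1 by (simp add: algebra_simps)
qed

lemma gain:
  assumes matroid: "matroid N Ind" and S: "S \<in> Ind"
    and rank: "k = matroid_rank Ind" and kpos: "k > 0"
    and submod: "submodular_on N f"
    and Opt: "is_base (contract_ground N S) (contract_indep N Ind S) (Opt S)"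
    and Mc: "is_base (contract_ground N S) (contract_indep N Ind S) (Mc S)"
    and Mcopt: "(\<Sum>u\<in>Opt S. f (insert u S) - f S) \<le> (\<Sum>u\<in>Mc S. f (insert u S) - f S)"
  shows "measure_pmf.expectation (srrg_step k Mc S) f - f S
     \<ge> 1 / real k * (f (Opt S \<union> S) - f S)"
proof -
  have bM: "finite (Mc S) \<and> Mc S \<subseteq> N - S \<and> card (Mc S) + card S = k"
    using base_card[OF matroid S Mc] rank by simp
  have bO: "finite (Opt S) \<and> Opt S \<subseteq> N - S \<and> card (Opt S) + card S = k"
    using base_card[OF matroid S Opt] rank by simp
  have SN: "S \<subseteq> N" using S matroid unfolding matroid_def by auto
  have sm: "f (S \<union> Opt S) - f S \<le> (\<Sum>u\<in>Opt S. f (insert u S) - f S)"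
    using submod_sum[OF submod SN] bO by auto
  show ?thesis
  proof (cases "card S = k")
    case True
    then have "Opt S = {}" using bO by auto
    moreover have "1 - real (card S) / real k = 0" using True kpos by auto
    ultimately show ?thesis unfolding srrg_step_def
      by (simp add: bern0r bind_return_pmf)
  next
    case False
    define p where "p = 1 - real (card S) / real k"
    define B where "B = Mc S"
    have ne: "B \<noteq> {}" using bM False B_def by auto
    have fB: "finite B" using bM B_def by auto
    have p01: "0 \<le> p" "p \<le> 1" unfolding p_def using bM kpos by auto
    have E0: "measure_pmf.expectation (srrg_step k Mc S) f
       = p * ((\<Sum>u\<in>B. f (insert u S)) / real (card B)) + (1 - p) * f S"
      unfolding srrg_step_def p_def[symmetric] B_def[symmetric]
      using p01 ne fB by (subst exp_bern) (auto simp: integral_pmf_of_set)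
    have sub: "(\<Sum>u\<in>B. f (insert u S) - f S) = (\<Sum>u\<in>B. f (insert u S)) - real (card B) * f S"
      by (simp add: sum_subtractf)
    have kk: "real k = real (card B) + real (card S)" using bM B_def by simp
    have cB: "real (card B) > 0" using ne fB by auto
    have E1: "measure_pmf.expectation (srrg_step k Mc S) f
       = (1 - real (card S) / (real (card B) + real (card S))) * ((\<Sum>u\<in>B. f (insert u S)) / real (card B))
         + (1 - (1 - real (card S) / (real (card B) + real (card S)))) * f S"
      using E0 unfolding p_def kk .
    have eq: "measure_pmf.expectation (srrg_step k Mc S) f - f S
       = 1 / real k * (\<Sum>u\<in>B. f (insert u S) - f S)"
      unfolding sub kk by (rule alg[OF cB _ E1]) simp
    have "f (Opt S \<union> S) - f S \<le> (\<Sum>u\<in>B. f (insert u S) - f S)"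
      using sm Mcopt B_def by (simp add: Un_commute)
    then show ?thesis unfolding eq using kpos
      by (intro mult_left_mono) auto
  qed
qed

lemma supp_dist:
  assumes matroid: "matroid N Ind"
    and rank: "k = matroid_rank Ind" and kpos: "k > 0"
    and Mc: "\<forall>S\<in>Ind. is_base (contract_ground N S) (contract_indep N Ind S) (Mc S)"
  shows "set_pmf (srrg_dist k Mc n) \<subseteq> Ind"
proof (induction n)
  case 0 then show ?case using matroid unfolding matroid_def by simp
next
  case (Suc n)
  then show ?case using supp_step[OF matroid _ _ rank kpos] Mc by fastforce
qed

theorem lemma12:
  fixes N :: "'a set" and Ind :: "'a set set" and f :: "'a set \<Rightarrow> real"
    and k T i :: nat and Mc Opt :: "'a set \<Rightarrow> 'a set"
  assumes matroid: "matroid N Ind"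
    and rank: "k = matroid_rank Ind" and kpos: "k > 0"
    and nonneg: "\<forall>A. A \<subseteq> N \<longrightarrow> f A \<ge> 0"
    and submod: "submodular_on N f"
    and Opt_opt: "\<forall>S\<in>Ind. is_base (contract_ground N S) (contract_indep N Ind S) (Opt S) \<and>
                  (\<forall>A\<in>contract_indep N Ind S. f (S \<union> A) \<le> f (S \<union> Opt S))"
    and Mc_opt: "\<forall>S\<in>Ind. is_base (contract_ground N S) (contract_indep N Ind S) (Mc S) \<and>
                  (\<forall>B. is_base (contract_ground N S) (contract_indep N Ind S) B \<longrightarrow>
                     (\<Sum>u\<in>B. f (insert u S) - f S) \<le> (\<Sum>u\<in>Mc S. f (insert u S) - f S))"
    and i: "1 \<le> i" "i \<le> T"
  shows "measure_pmf.expectation (srrg_dist k Mc i) f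
           - measure_pmf.expectation (srrg_dist k Mc (i - 1)) f
         \<ge> 1 / real k * measure_pmf.expectation (srrg_dist k Mc (i - 1))
                          (\<lambda>S. f (Opt S \<union> S) - f S)"
proof -
  define p where "p = srrg_dist k Mc (i - 1)"
  have si: "srrg_dist k Mc i = bind_pmf p (srrg_step k Mc)"
    unfolding p_def using i by (cases i) auto
  have McB: "\<forall>S\<in>Ind. is_base (contract_ground N S) (contract_indep N Ind S) (Mc S)"
    using Mc_opt by blast
  have sp: "set_pmf p \<subseteq> Ind" unfolding p_def using supp_dist[OF matroid rank kpos McB] .
  have finI: "finite Ind" using matroid unfolding matroid_def
    by (meson Pow_iff finite_Pow_iff finite_subset subsetI)
  have finstep: "finite (set_pmf (srrg_step k Mc S))" if "S \<in> Ind" for S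
    using supp_step[OF matroid that _ rank kpos] McB that finI finite_subset by metis
  have E1: "measure_pmf.expectation (srrg_dist k Mc i) f
     = (\<Sum>S\<in>Ind. pmf p S * measure_pmf.expectation (srrg_step k Mc S) f)"
    unfolding si using finI finstep sp by (subst pmf_expectation_bind[where A=Ind]) auto
  have E2: "measure_pmf.expectation p h = (\<Sum>S\<in>Ind. pmf p S * h S)" for h :: "'a set \<Rightarrow> real"
    using finI sp by (subst integral_measure_pmf[where A=Ind]) auto
  have g: "pmf p S * (1 / real k * (f (Opt S \<union> S) - f S))
      \<le> pmf p S * measure_pmf.expectation (srrg_step k Mc S) f - pmf p S * f S" if "S \<in> Ind" for S
  proof -
    have "1 / real k * (f (Opt S \<union> S) - f S) \<le> measure_pmf.expectation (srrg_step k Mc S) f - f S"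
    proof -
      have oS: "is_base (contract_ground N S) (contract_indep N Ind S) (Opt S)"
        using Opt_opt that by blast
      have mS: "is_base (contract_ground N S) (contract_indep N Ind S) (Mc S)"
        using Mc_opt that by blast
      have mo: "(\<Sum>u\<in>Opt S. f (insert u S) - f S) \<le> (\<Sum>u\<in>Mc S. f (insert u S) - f S)"
        using Mc_opt that oS by blast
      show ?thesis by (rule gain[where Opt=Opt and Mc=Mc, OF matroid that rank kpos submod oS mS mo])
    qed
    then have "pmf p S * (1 / real k * (f (Opt S \<union> S) - f S))
       \<le> pmf p S * (measure_pmf.expectation (srrg_step k Mc S) f - f S)"
      by (rule mult_left_mono[OF _ pmf_nonneg])
    then show ?thesis by (simp add: right_diff_distrib)
  qed
  have "1 / real k * measure_pmf.expectation p (\<lambda>S. f (Opt S \<union> S) - f S)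
     = (\<Sum>S\<in>Ind. pmf p S * (1 / real k * (f (Opt S \<union> S) - f S)))"
    unfolding E2 by (simp add: sum_distrib_left algebra_simps)
  also have "\<dots> \<le> (\<Sum>S\<in>Ind. pmf p S * measure_pmf.expectation (srrg_step k Mc S) f - pmf p S * f S)"
    using g by (rule sum_mono)
  also have "\<dots> = measure_pmf.expectation (srrg_dist k Mc i) f - measure_pmf.expectation p f"
    unfolding E1 E2 by (simp add: sum_subtractf)
  finally show ?thesis unfolding p_def .
qed

end
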